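(* Fix integers $N\geq 1$ and $r\geq 0$. Let $d=(d_0,d_1,\dots,d_N)\in\mathbb Z^{N+1}$ be a degree sequence (i.e. $d_{j+1}>d_j$ for all $j$) with $d_0=0$ and $d_N\leq N+r$. For $0\leq i\leq N$ define \[ \beta_i(\pi_d):=\frac{\prod_{j\neq 0} d_j}{\prod_{i'\neq i}|d_i-d_{i'}|}, \] where the products run over $j\in\{1,\dots,N\}$ and $i'\in\{0,\dots,N\}\setminus\{i\}$. Then for every $0\leq i\leq N$, \[ \binom{N}{i}\cdot N^{-r}\;\leq\;\beta_i(\pi_d)\;\leq\;\binom{N}{i}\cdot N^{r}. \]
   Context: The numbers $\beta_i(\pi_d)$ are the nonzero entries $\beta_{i,d_i}$ of the pure diagram $\pi_d$ of type $d$ (normalized so that $\beta_0(\pi_d)=1$), a Betti table whose only nonzero entry in homological degree $i$ is in internal degree $d_i$. *)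

theory Defs
  imports Complex_Main
begin

definition pure_beta :: "nat \<Rightarrow> (nat \<Rightarrow> int) \<Rightarrow> nat \<Rightarrow> real" where
  "pure_beta N d i =
     (\<Prod>j\<in>{1..N}. real_of_int (d j)) /
     (\<Prod>i'\<in>{0..N} - {i}. real_of_int \<bar>d i - d i'\<bar>)"

end

theory Submission
  imports Defs
begin

lemma tele:
  fixes f :: "nat \<Rightarrow> real"
  assumes "a \<le> b" "\<And>j. a \<le> j \<Longrightarrow> j \<le> b \<Longrightarrow> f j \<noteq> 0"
  shows "(\<Prod>j\<in>{a..<b}. f (Suc j) / f j) = f b / f a"
  using assms
proof (induction b)
  case 0 thus ?case by simp
next
  case (Suc b)
  show ?case
  proof (cases "a = Suc b")
    case True thus ?thesis using Suc.prems by simp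
  next
    case False
    hence ab: "a \<le> b" using Suc.prems by simp
    have "(\<Prod>j\<in>{a..<Suc b}. f (Suc j) / f j) = (\<Prod>j\<in>{a..<b}. f (Suc j) / f j) * (f (Suc b) / f b)"
      using ab by (simp add: prod.atLeastLessThan_Suc)
    also have "\<dots> = f b / f a * (f (Suc b) / f b)" using Suc ab by simp
    also have "\<dots> = f (Suc b) / f a" using Suc.prems ab by simp
    finally show ?thesis .
  qed
qed

lemma gap:
  assumes "\<And>j. j < N \<Longrightarrow> d j < d (Suc j)" "j \<le> j'" "j' \<le> N"
  shows "d j + int (j' - j) \<le> d j'"
  using assms(2,3)
proof (induction j')
  case 0 thus ?case by simp
next
  case (Suc n)
  show ?case
  proof (cases "j = Suc n")
    case True thus ?thesis by simp
  next
    case False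
    hence jn: "j \<le> n" using Suc.prems by simp
    hence "d j + int (n - j) \<le> d n" using Suc by simp
    moreover have "d n < d (Suc n)" using assms(1) Suc.prems by simp
    moreover have "int (Suc n - j) = int (n - j) + 1" using jn by simp
    ultimately show ?thesis by linarith
  qed
qed

lemma beta0:
  assumes "\<And>j. j < N \<Longrightarrow> d j < d (Suc j)" "d 0 = 0"
  shows "pure_beta N d 0 = 1"
proof -
  have pos: "d j > 0" if "j \<in> {1..N}" for j
    using gap[of N d 0 j, OF assms(1)] that assms(2) by auto
  have e: "{0..N} - {0} = {1..N}" by auto
  have "(\<Prod>i'\<in>{0..N} - {0}. real_of_int \<bar>d 0 - d i'\<bar>) = (\<Prod>j\<in>{1..N}. real_of_int (d j))"
    unfolding e using pos assms(2) by (intro prod.cong) (auto simp: abs_of_pos)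
  moreover have "(\<Prod>j\<in>{1..N}. real_of_int (d j)) \<noteq> 0" using pos
    by (subst prod_zero_iff) force+
  ultimately show ?thesis unfolding pure_beta_def by simp
qed

lemma beta_alt:
  assumes inc: "\<And>j. j < N \<Longrightarrow> d j < d (Suc j)" and d0: "d 0 = 0" and i: "1 \<le> i" "i \<le> N"
  shows "pure_beta N d i = (\<Prod>j\<in>{1..N}-{i}. real_of_int (d j) / real_of_int \<bar>d i - d j\<bar>)"
proof -
  have pos: "d i > 0" using gap[of N d 0 i, OF inc] i d0 by auto
  have A: "{1..N} = insert i ({1..N}-{i})" and B: "{0..N}-{i} = insert 0 ({1..N}-{i})" using i by auto
  have "pure_beta N d i = (real_of_int (d i) * (\<Prod>j\<in>{1..N}-{i}. real_of_int (d j))) /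
      (real_of_int (d i) * (\<Prod>j\<in>{1..N}-{i}. real_of_int \<bar>d i - d j\<bar>))"
    unfolding pure_beta_def
    by (subst A, subst B, subst prod.insert, simp, simp, subst prod.insert, auto simp: d0 pos abs_of_pos)
  also have "\<dots> = (\<Prod>j\<in>{1..N}-{i}. real_of_int (d j)) / (\<Prod>j\<in>{1..N}-{i}. real_of_int \<bar>d i - d j\<bar>)"
    using pos by simp
  also have "\<dots> = (\<Prod>j\<in>{1..N}-{i}. real_of_int (d j) / real_of_int \<bar>d i - d j\<bar>)"
    by (simp add: prod_dividef)
  finally show ?thesis .
qed


lemma R1:
  fixes x y m :: real
  assumes "y \<le> x" "m \<le> y" "1 \<le> m"
  shows "m / (m + 1) \<le> ((x + 1) / (y + 1)) / (x / y) \<and> ((x + 1) / (y + 1)) / (x / y) \<le> 1"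
proof -
  have xp: "0 < x" "0 < y" using assms by auto
  have e: "((x + 1) / (y + 1)) / (x / y) = ((x+1)*y) / ((y+1)*x)" using xp by (simp add: field_simps)
  have "m / (m+1) \<le> y / (y+1)" using assms by (simp add: field_simps)
  also have "y/(y+1) = (x*y) / ((y+1)*x)" using xp by simp
  also have "\<dots> \<le> ((x+1)*y) / ((y+1)*x)" using xp by (intro divide_right_mono) auto
  finally have 1: "m / (m+1) \<le> ((x+1)*y) / ((y+1)*x)" .
  have 2: "((x+1)*y) / ((y+1)*x) \<le> 1" using xp assms by (subst pos_divide_le_eq) (auto simp: algebra_simps intro: mult_pos_pos add_pos_pos)
  show ?thesis using 1 2 e by simp
qed

lemma R2:
  fixes x y m :: real
  assumes "0 < x" "m \<le> y" "1 \<le> m"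
  shows "m / (m + 1) \<le> (x / (y + 1)) / (x / y) \<and> (x / (y + 1)) / (x / y) \<le> 1"
proof -
  have yp: "0 < y" using assms by auto
  have "(x / (y + 1)) / (x / y) = (x*y) / ((y+1)*x)" by simp
  also have "\<dots> = y / (y+1)" using assms by simp
  finally have e: "(x / (y + 1)) / (x / y) = y / (y+1)" .
  have "m / (m+1) \<le> y / (y+1)" using assms by (simp add: field_simps)
  moreover have "y/(y+1) \<le> 1" using assms by simp
  ultimately show ?thesis using e by simp
qed

lemma R3:
  fixes x z m :: real
  assumes "0 < z" "m \<le> x" "1 \<le> m"
  shows "1 \<le> ((x + 1) / z) / (x / z) \<and> ((x + 1) / z) / (x / z) \<le> (m + 1) / m"
proof -
  have e: "((x + 1) / z) / (x / z) = (x + 1) / x" using assms by simp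
  have "(x+1)/x \<le> (m+1)/m" using assms by (simp add: field_simps)
  moreover have "1 \<le> (x+1)/x" using assms by simp
  ultimately show ?thesis unfolding e by simp
qed


lemma ratio:
  assumes inc: "\<And>j. j < N \<Longrightarrow> d j < d (Suc j)" and d0: "d 0 = 0"
    and k: "1 \<le> k" "k \<le> N" and i: "1 \<le> i" "i \<le> N"
  shows "pure_beta N d i / N \<le> pure_beta N (\<lambda>j. if k \<le> j then d j + 1 else d j) i
       \<and> pure_beta N (\<lambda>j. if k \<le> j then d j + 1 else d j) i \<le> N * pure_beta N d i"
proof -
  define d' where "d' = (\<lambda>j. if k \<le> j then d j + 1 else d j)"
  have inc': "d' j < d' (Suc j)" if "j < N" for j using inc[OF that] by (auto simp: d'_def)
  have d'0: "d' 0 = 0" using k d0 by (simp add: d'_def)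
  define S where "S = {1..N}-{i}"
  define g where "g = (\<lambda>j. real_of_int (d j) / real_of_int \<bar>d i - d j\<bar>)"
  define g' where "g' = (\<lambda>j. real_of_int (d' j) / real_of_int \<bar>d' i - d' j\<bar>)"
  have b: "pure_beta N d i = prod g S" using beta_alt[OF inc d0 i] by (simp add: g_def S_def)
  have b': "pure_beta N d' i = prod g' S" using beta_alt[OF inc' d'0 i] by (simp add: g'_def S_def)
  have dge: "d j \<ge> int j" if "j \<le> N" for j using gap[of N d 0 j, OF inc] that d0 by simp
  have dlt: "d j + int (j' - j) \<le> d j'" if "j \<le> j'" "j' \<le> N" for j j'
    using gap[of N d j j', OF inc] that by simp
  have gpos: "g j > 0" if "j \<in> S" for j
  proof -
    have "d j > 0" using dge[of j] that by (auto simp: S_def)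
    moreover have "d i \<noteq> d j"
    proof (cases "j < i")
      case True thus ?thesis using dlt[of j i] i by auto
    next
      case False hence "i < j" using that by (auto simp: S_def)
      thus ?thesis using dlt[of i j] that by (auto simp: S_def)
    qed
    ultimately show ?thesis by (simp add: g_def)
  qed
  define h where "h = (\<lambda>j. g' j / g j)"
  have "prod g' S = prod (\<lambda>j. g j * h j) S"
    using gpos by (intro prod.cong) (auto simp: h_def dest: less_imp_neq[symmetric] gpos)
  hence gh: "prod g' S = prod g S * prod h S" by (simp add: prod.distrib)
  have finS: "finite S" by (simp add: S_def)
  have NN: "real N \<ge> 1" using k by simp
  have hb: "1 / real N \<le> prod h S \<and> prod h S \<le> real N"
  proof (cases "i < k")
    case True
    have h1: "h j = 1" if "j \<in> S" "j < k" for j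
    proof -
      have "g' j = g j" using that True by (simp add: g_def g'_def d'_def)
      thus ?thesis using gpos[OF that(1)] by (simp add: h_def)
    qed
    have h2: "(real j - real i) / (real j - real i + 1) \<le> h j \<and> h j \<le> 1" if "j \<in> S" "k \<le> j" for j
    proof -
      have ij: "i < j" "j \<le> N" using True that by (auto simp: S_def)
      have di: "d i \<ge> 0" using dge[of i] i by simp
      have y: "d j - d i \<ge> int (j - i)" using dlt[of i j] ij by simp
      have e1: "g j = real_of_int (d j) / real_of_int (d j - d i)" using y ij by (simp add: g_def)
      have e2: "g' j = (real_of_int (d j) + 1) / (real_of_int (d j - d i) + 1)"
        using y ij True that by (simp add: g'_def d'_def)
      have "(real j - real i) / (real j - real i + 1) \<le> ((real_of_int (d j) + 1) / (real_of_int (d j - d i) + 1)) / (real_of_int (d j) / real_of_int (d j - d i))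
        \<and> ((real_of_int (d j) + 1) / (real_of_int (d j - d i) + 1)) / (real_of_int (d j) / real_of_int (d j - d i)) \<le> 1"
      proof (rule R1)
        show "real_of_int (d j - d i) \<le> real_of_int (d j)" using di by simp
        have "real_of_int (int (j - i)) \<le> real_of_int (d j - d i)" using y by linarith
        thus "real j - real i \<le> real_of_int (d j - d i)" using ij by (simp add: of_nat_diff)
        show "1 \<le> real j - real i" using ij by simp
      qed
      thus ?thesis by (simp add: h_def e1 e2)
    qed
    have up: "prod h S \<le> 1"
    proof (rule prod_le_1)
      fix j assume "j \<in> S"
      show "0 \<le> h j \<and> h j \<le> 1"
      proof (cases "j < k")
        case True thus ?thesis using h1 \<open>j \<in> S\<close> by simp
      next
        case False
        hence "k \<le> j" by simp
        have "0 \<le> (real j - real i) / (real j - real i + 1)" using \<open>i < k\<close> \<open>k \<le> j\<close> by simp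
        thus ?thesis using h2[OF \<open>j \<in> S\<close> \<open>k \<le> j\<close>] by linarith
      qed
    qed
    define lo where "lo = (\<lambda>j. if k \<le> j then (real j - real i) / (real j - real i + 1) else 1)"
    have "prod lo S \<le> prod h S"
    proof (rule prod_mono)
      fix j assume "j \<in> S"
      show "0 \<le> lo j \<and> lo j \<le> h j"
        using h1[OF \<open>j \<in> S\<close>] h2[OF \<open>j \<in> S\<close>] \<open>i < k\<close> by (auto simp: lo_def)
    qed
    moreover have "prod lo S = (\<Prod>j\<in>{k..<Suc N}. (real j - real i) / (real j - real i + 1))"
    proof -
      have "prod lo S = (\<Prod>j\<in>S \<inter> {j. k \<le> j}. (real j - real i) / (real j - real i + 1)) * (\<Prod>j\<in>S \<inter> - {j. k \<le> j}. 1)"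
        unfolding lo_def by (rule prod.If_cases[OF finS])
      moreover have "S \<inter> {j. k \<le> j} = {k..<Suc N}" using True k by (auto simp: S_def)
      ultimately show ?thesis by simp
    qed
    moreover have "(\<Prod>j\<in>{k..<Suc N}. (real j - real i) / (real j - real i + 1))
        = (\<Prod>j\<in>{k..<Suc N}. (\<lambda>j. 1 / (real j - real i)) (Suc j) / (\<lambda>j. 1 / (real j - real i)) j)"
      using True by (intro prod.cong) (auto simp: field_simps)
    moreover have "\<dots> = (1 / (real (Suc N) - real i)) / (1 / (real k - real i))"
      using k True by (intro tele) auto
    moreover have "\<dots> = (real k - real i) / (real N + 1 - real i)" by simp
    moreover have "1 / real N \<le> (real k - real i) / (real N + 1 - real i)"
    proof -
      have "1 / real N \<le> 1 / (real N + 1 - real i)" using i by (intro divide_left_mono) auto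
      also have "\<dots> \<le> (real k - real i) / (real N + 1 - real i)" using True i
        by (intro divide_right_mono) auto
      finally show ?thesis .
    qed
    ultimately show ?thesis using up NN by linarith
  next
    case False
    hence ki: "k \<le> i" by simp
    have hlo: "(real i - real j) / (real i - real j + 1) \<le> h j \<and> h j \<le> 1" if "j \<in> S" "j < k" for j
    proof -
      have ij: "j < i" "1 \<le> j" using ki that by (auto simp: S_def)
      have dj: "d j > 0" using dge[of j] ij i by simp
      have y: "d i - d j \<ge> int (i - j)" using dlt[of j i] ij i by simp
      have e1: "g j = real_of_int (d j) / real_of_int (d i - d j)" using y ij by (simp add: g_def)
      have e2: "g' j = real_of_int (d j) / (real_of_int (d i - d j) + 1)"
        using y ij ki that by (simp add: g'_def d'_def)
      have "(real i - real j) / (real i - real j + 1) \<le> (real_of_int (d j) / (real_of_int (d i - d j) + 1)) / (real_of_int (d j) / real_of_int (d i - d j))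
        \<and> (real_of_int (d j) / (real_of_int (d i - d j) + 1)) / (real_of_int (d j) / real_of_int (d i - d j)) \<le> 1"
      proof (rule R2)
        show "0 < real_of_int (d j)" using dj by simp
        have "real_of_int (int (i - j)) \<le> real_of_int (d i - d j)" using y by linarith
        thus "real i - real j \<le> real_of_int (d i - d j)" using ij by (simp add: of_nat_diff)
        show "1 \<le> real i - real j" using ij by simp
      qed
      thus ?thesis by (simp add: h_def e1 e2)
    qed
    have hhi: "1 \<le> h j \<and> h j \<le> (real j + 1) / real j" if "j \<in> S" "k \<le> j" for j
    proof -
      have ij: "j \<noteq> i" "1 \<le> j" "j \<le> N" using that by (auto simp: S_def)
      have dj: "d j \<ge> int j" using dge[of j] ij by simp
      have z: "\<bar>d i - d j\<bar> > 0"
      proof (cases "j < i")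
        case True thus ?thesis using dlt[of j i] i by auto
      next
        case False hence "i < j" using ij by simp
        thus ?thesis using dlt[of i j] ij by auto
      qed
      have e1: "g j = real_of_int (d j) / real_of_int \<bar>d i - d j\<bar>" by (simp add: g_def)
      have e2: "g' j = (real_of_int (d j) + 1) / real_of_int \<bar>d i - d j\<bar>"
        using ki that by (simp add: g'_def d'_def)
      have "1 \<le> ((real_of_int (d j) + 1) / real_of_int \<bar>d i - d j\<bar>) / (real_of_int (d j) / real_of_int \<bar>d i - d j\<bar>)
        \<and> ((real_of_int (d j) + 1) / real_of_int \<bar>d i - d j\<bar>) / (real_of_int (d j) / real_of_int \<bar>d i - d j\<bar>) \<le> (real j + 1) / real j"
      proof (rule R3)
        show "0 < real_of_int \<bar>d i - d j\<bar>" using z by simp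
        show "real j \<le> real_of_int (d j)" using dj by simp
        show "1 \<le> real j" using ij by simp
      qed
      thus ?thesis by (simp add: h_def e1 e2)
    qed
    define lo where "lo = (\<lambda>j. if j < k then (real i - real j) / (real i - real j + 1) else 1)"
    define hi where "hi = (\<lambda>j. if j < k then 1 else (real j + 1) / real j)"
    have "prod lo S \<le> prod h S"
    proof (rule prod_mono)
      fix j assume "j \<in> S"
      have "j < k \<Longrightarrow> 0 \<le> (real i - real j) / (real i - real j + 1)" using ki by simp
      thus "0 \<le> lo j \<and> lo j \<le> h j"
        using hlo[OF \<open>j \<in> S\<close>] hhi[OF \<open>j \<in> S\<close>] by (auto simp: lo_def)
    qed
    moreover have "prod h S \<le> prod hi S"
    proof (rule prod_mono)
      fix j assume "j \<in> S"
      show "0 \<le> h j \<and> h j \<le> hi j"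
      proof (cases "j < k")
        case True
        have "0 \<le> (real i - real j) / (real i - real j + 1)" using ki True by (intro divide_nonneg_nonneg) auto
        moreover have "hi j = 1" using True by (simp add: hi_def)
        ultimately show ?thesis using hlo[OF \<open>j \<in> S\<close> True] by linarith
      next
        case False
        hence kj: "k \<le> j" by simp
        have "hi j = (real j + 1) / real j" using False by (simp add: hi_def)
        thus ?thesis using hhi[OF \<open>j \<in> S\<close> kj] by linarith
      qed
    qed
    moreover have "prod lo S = (\<Prod>j\<in>{1..<k}. (real i - real j) / (real i - real j + 1))"
    proof -
      have "prod lo S = (\<Prod>j\<in>S \<inter> {j. j < k}. (real i - real j) / (real i - real j + 1)) * (\<Prod>j\<in>S \<inter> - {j. j < k}. 1)"
        unfolding lo_def by (rule prod.If_cases[OF finS])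
      moreover have "S \<inter> {j. j < k} = {1..<k}" using ki k by (auto simp: S_def)
      ultimately show ?thesis by simp
    qed
    moreover have "(\<Prod>j\<in>{1..<k}. (real i - real j) / (real i - real j + 1))
        = (\<Prod>j\<in>{1..<k}. (\<lambda>j. real i - real j + 1) (Suc j) / (\<lambda>j. real i - real j + 1) j)"
      by (intro prod.cong) auto
    moreover have "\<dots> = (real i - real k + 1) / (real i - real 1 + 1)"
      using k ki by (intro tele) auto
    moreover have "1 / real N \<le> (real i - real k + 1) / (real i - real 1 + 1)"
    proof -
      have "1 / real N \<le> 1 / real i" using i by (intro divide_left_mono) auto
      also have "\<dots> \<le> (real i - real k + 1) / real i" using ki i
        by (intro divide_right_mono) auto
      finally show ?thesis by simp
    qed
    moreover have "prod hi S \<le> real N"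
    proof -
      have "prod hi S = (\<Prod>j\<in>S \<inter> {j. j < k}. 1) * (\<Prod>j\<in>S \<inter> - {j. j < k}. (real j + 1) / real j)"
        unfolding hi_def by (rule prod.If_cases[OF finS])
      hence "prod hi S = (\<Prod>j\<in>S \<inter> - {j. j < k}. (real j + 1) / real j)" by simp
      also have "\<dots> \<le> (\<Prod>j\<in>S. (real j + 1) / real j)"
      proof -
        have "(\<Prod>j\<in>S. (real j + 1) / real j) = (\<Prod>j\<in>S - (S \<inter> - {j. j < k}). (real j + 1) / real j) * (\<Prod>j\<in>S \<inter> - {j. j < k}. (real j + 1) / real j)"
          by (rule prod.subset_diff) (auto simp: finS)
        moreover have "1 \<le> (\<Prod>j\<in>S - (S \<inter> - {j. j < k}). (real j + 1) / real j)"
          by (rule prod_ge_1) (auto simp: S_def)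
        moreover have "0 \<le> (\<Prod>j\<in>S \<inter> - {j. j < k}. (real j + 1) / real j)"
          by (rule prod_nonneg) auto
        ultimately show ?thesis using mult_right_mono[of 1 "\<Prod>j\<in>S - (S \<inter> - {j. j < k}). (real j + 1) / real j" "\<Prod>j\<in>S \<inter> - {j. j < k}. (real j + 1) / real j"] by simp
      qed
      also have "(\<Prod>j\<in>S. (real j + 1) / real j) = real i / (real i + 1) * (real N + 1)"
      proof -
        have "(\<Prod>j\<in>{1..<Suc N}. (real j + 1) / real j) = (\<Prod>j\<in>{1..<Suc N}. (\<lambda>j. real j) (Suc j) / (\<lambda>j. real j) j)"
          by (intro prod.cong) auto
        also have "\<dots> = real (Suc N) / real 1" using k by (intro tele) auto
        finally have T: "(\<Prod>j\<in>{1..N}. (real j + 1) / real j) = real N + 1"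
          by (simp add: atLeastLessThanSuc_atLeastAtMost)
        have "(\<Prod>j\<in>{1..N}. (real j + 1) / real j) = (real i + 1) / real i * (\<Prod>j\<in>S. (real j + 1) / real j)"
          unfolding S_def using i by (intro prod.remove) auto
        hence "(real i + 1) / real i * (\<Prod>j\<in>S. (real j + 1) / real j) = real N + 1" using T by simp
        thus ?thesis using i by (simp add: field_simps)
      qed
      also have "\<dots> \<le> real N"
      proof -
        have "real i * (real N + 1) \<le> real N * (real i + 1)" using i by (simp add: algebra_simps)
        thus ?thesis using i by (simp add: field_simps)
      qed
      finally show ?thesis .
    qed
    ultimately show ?thesis by linarith
  qed
  have bnn: "prod g S \<ge> 0" using gpos by (intro prod_nonneg) (auto intro: less_imp_le)
  have "pure_beta N d i / N = prod g S * (1 / real N)" using b by simp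
  also have "\<dots> \<le> prod g S * prod h S" using hb bnn by (intro mult_left_mono) auto
  finally have L: "pure_beta N d i / N \<le> pure_beta N d' i" using b' gh by simp
  have "prod g S * prod h S \<le> prod g S * real N" using hb bnn by (intro mult_left_mono) auto
  hence U: "pure_beta N d' i \<le> N * pure_beta N d i" using b b' gh by (simp add: mult.commute)
  show ?thesis using L U by (simp add: d'_def)
qed


lemma base:
  assumes dd: "\<And>j. j \<le> N \<Longrightarrow> d j = int j" and i: "i \<le> N"
  shows "pure_beta N d i = real (N choose i)"
proof -
  have num: "(\<Prod>j\<in>{1..N}. real_of_int (d j)) = fact N"
    by (simp add: fact_prod dd)
  have U: "{0..N} - {i} = {0..<i} \<union> {Suc i..N}" using i by auto
  have den1: "(\<Prod>i'\<in>{0..<i}. real_of_int \<bar>d i - d i'\<bar>) = fact i"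
  proof -
    have "(\<Prod>i'\<in>{0..<i}. real_of_int \<bar>d i - d i'\<bar>) = (\<Prod>i'\<in>{0..<i}. real (i - i'))"
      using i dd by (intro prod.cong) (auto simp: of_nat_diff)
    thus ?thesis by (simp add: fact_prod_rev)
  qed
  have den2: "(\<Prod>i'\<in>{Suc i..N}. real_of_int \<bar>d i - d i'\<bar>) = fact (N - i)"
  proof -
    have "(\<Prod>i'\<in>{Suc i..N}. real_of_int \<bar>d i - d i'\<bar>) = (\<Prod>i'\<in>{Suc i..N}. real (i' - i))"
      using i dd by (intro prod.cong) (auto simp: of_nat_diff)
    also have "\<dots> = (\<Prod>i'\<in>{1 + i..(N - i) + i}. real (i' - i))"
    proof -
      have eq: "{Suc i..N} = {1 + i..(N - i) + i}" using i by auto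
      show ?thesis by (simp only: eq)
    qed
    also have "(\<Prod>i'\<in>{1 + i..(N - i) + i}. real (i' - i)) = (\<Prod>m\<in>{1..N - i}. real (m + i - i))"
      by (rule prod.shift_bounds_cl_nat_ivl)
    also have "\<dots> = fact (N - i)" by (simp add: fact_prod)
    finally show ?thesis .
  qed
  have "(\<Prod>i'\<in>{0..N} - {i}. real_of_int \<bar>d i - d i'\<bar>) = (\<Prod>i'\<in>{0..<i}. real_of_int \<bar>d i - d i'\<bar>) * (\<Prod>i'\<in>{Suc i..N}. real_of_int \<bar>d i - d i'\<bar>)"
    unfolding U by (subst prod.union_disjoint) auto
  also have "\<dots> = fact i * fact (N - i)" by (simp only: den1 den2)
  finally have "(\<Prod>i'\<in>{0..N} - {i}. real_of_int \<bar>d i - d i'\<bar>) = fact i * fact (N - i)" .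
  thus ?thesis unfolding pure_beta_def num using binomial_fact[OF i, where 'a=real] by simp
qed

lemma main:
  fixes N r :: nat
  assumes N: "N \<ge> 1" and i: "1 \<le> i" "i \<le> N"
  shows "\<forall>d. (\<forall>j<N. d j < d (Suc j)) \<longrightarrow> d 0 = 0 \<longrightarrow> d N \<le> int N + int r \<longrightarrow>
     real (N choose i) / real N ^ r \<le> pure_beta N d i \<and> pure_beta N d i \<le> real (N choose i) * real N ^ r"
proof (induction r)
  case 0
  show ?case
  proof (intro allI impI)
    fix d :: "nat \<Rightarrow> int"
    assume inc: "\<forall>j<N. d j < d (Suc j)" and d0: "d 0 = 0" and dN: "d N \<le> int N + int 0"
    have inc': "\<And>j. j < N \<Longrightarrow> d j < d (Suc j)" using inc by simp
    have "d j = int j" if "j \<le> N" for j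
      using gap[of N d 0 j, OF inc'] gap[of N d j N, OF inc'] that d0 dN by simp
    hence "pure_beta N d i = real (N choose i)" using base i by blast
    thus "real (N choose i) / real N ^ 0 \<le> pure_beta N d i \<and> pure_beta N d i \<le> real (N choose i) * real N ^ 0"
      by simp
  qed
next
  case (Suc r)
  show ?case
  proof (intro allI impI)
    fix d :: "nat \<Rightarrow> int"
    assume inc: "\<forall>j<N. d j < d (Suc j)" and d0: "d 0 = 0" and dN: "d N \<le> int N + int (Suc r)"
    have inc': "\<And>j. j < N \<Longrightarrow> d j < d (Suc j)" using inc by simp
    define C where "C = real (N choose i)"
    have C0: "C \<ge> 0" by (simp add: C_def)
    have Npos: "real N \<ge> 1" using N by simp
    have pp: "real N ^ r \<ge> 1" using Npos by simp
    show "real (N choose i) / real N ^ Suc r \<le> pure_beta N d i \<and> pure_beta N d i \<le> real (N choose i) * real N ^ Suc r"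
    proof (cases "d N \<le> int N + int r")
      case True
      have IH: "C / real N ^ r \<le> pure_beta N d i \<and> pure_beta N d i \<le> C * real N ^ r"
        using Suc.IH inc d0 True by (simp add: C_def)
      have "real N ^ r \<le> real N ^ Suc r" using Npos pp by simp
      moreover have "0 < real N ^ r" "0 < real N * real N ^ r" using Npos pp by auto
      ultimately have a: "C / real N ^ Suc r \<le> C / real N ^ r" using C0 pp by (intro divide_left_mono) auto
      have b: "C * real N ^ r \<le> C * real N ^ Suc r" using C0 \<open>real N ^ r \<le> real N ^ Suc r\<close> Npos
        by (intro mult_left_mono) auto
      show ?thesis using IH a b unfolding C_def by linarith
    next
      case False
      hence dN': "d N = int N + int r + 1" using dN by simp
      define P where "P = (\<lambda>j. d j - int j = d N - int N)"
      define k where "k = (LEAST j. P j)"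
      have Pk: "P k" unfolding k_def by (rule LeastI[of P N]) (simp add: P_def)
      have kN: "k \<le> N" unfolding k_def by (rule Least_le) (simp add: P_def)
      have k0: "k \<noteq> 0"
      proof
        assume "k = 0"
        with Pk d0 dN' show False by (simp add: P_def)
      qed
      have nP: "\<not> P (k - 1)" unfolding k_def
        by (rule not_less_Least) (use k0 in \<open>simp add: k_def\<close>)
      have "d (k - 1) < d k" using inc'[of "k - 1"] k0 kN by simp
      hence step: "d (k - 1) + 1 < d k" using nP Pk k0 by (auto simp: P_def of_nat_diff)
      define d'' where "d'' = (\<lambda>j. if k \<le> j then d j - 1 else d j)"
      have inc'': "d'' j < d'' (Suc j)" if "j < N" for j
      proof (cases "Suc j = k")
        case True thus ?thesis using step by (auto simp: d''_def)
      next
        case False thus ?thesis using inc'[OF that] by (auto simp: d''_def)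
      qed
      have d''0: "d'' 0 = 0" using k0 d0 by (simp add: d''_def)
      have d''N: "d'' N \<le> int N + int r" using kN dN' by (simp add: d''_def)
      have IH: "C / real N ^ r \<le> pure_beta N d'' i \<and> pure_beta N d'' i \<le> C * real N ^ r"
        using Suc.IH inc'' d''0 d''N by (simp add: C_def)
      have dd: "(\<lambda>j. if k \<le> j then d'' j + 1 else d'' j) = d" by (auto simp: d''_def)
      have R: "pure_beta N d'' i / N \<le> pure_beta N d i \<and> pure_beta N d i \<le> N * pure_beta N d'' i"
        using ratio[of N d'' k i, OF inc'' d''0 _ kN i] k0 dd by simp
      have "C / real N ^ Suc r = (C / real N ^ r) / real N" by simp
      also have "\<dots> \<le> pure_beta N d'' i / real N" using IH Npos by (intro divide_right_mono) auto
      finally have L: "C / real N ^ Suc r \<le> pure_beta N d i" using R by linarith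
      have "real N * pure_beta N d'' i \<le> real N * (C * real N ^ r)" using IH Npos by (intro mult_left_mono) auto
      hence U: "pure_beta N d i \<le> C * real N ^ Suc r" using R by (simp add: algebra_simps)
      show ?thesis using L U unfolding C_def by simp
    qed
  qed
qed

theorem lemma3p1:
  fixes N r :: nat and d :: "nat \<Rightarrow> int"
  assumes "N \<ge> 1"
    and "\<And>j. j < N \<Longrightarrow> d j < d (Suc j)"
    and "d 0 = 0"
    and "d N \<le> int N + int r"
    and "i \<le> N"
  shows "real (N choose i) * real N powi (- int r) \<le> pure_beta N d i
         \<and> pure_beta N d i \<le> real (N choose i) * real N ^ r"
proof -
  have pw: "real N powi (- int r) = 1 / real N ^ r" by (simp add: power_int_minus divide_inverse)
  have Npos: "real N \<ge> 1" using assms(1) by simp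
  have pp: "real N ^ r \<ge> 1" using Npos by simp
  show ?thesis
  proof (cases "i = 0")
    case True
    have "pure_beta N d 0 = 1" using beta0[OF assms(2) assms(3)] by simp
    moreover have "1 / real N ^ r \<le> 1" using pp by (simp add: divide_le_eq)
    ultimately show ?thesis using True pp pw by simp
  next
    case False
    have "real (N choose i) / real N ^ r \<le> pure_beta N d i \<and> pure_beta N d i \<le> real (N choose i) * real N ^ r"
      using main[OF assms(1), of i r] False assms by auto
    thus ?thesis using pw by simp
  qed
qed

end
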